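(* Let $\mathcal X,\mathcal Y$ be finite-dimensional Hilbert spaces, let $K\subset\mathcal Y$ be a closed convex cone with polar cone $K^{\circ}$, and let $g:\mathcal X\to\mathcal Y$ be a continuous mapping such that the set-valued mapping $\mathcal F_g:x\mapsto K-g(x)$ is graph-convex. Then the function $$\theta(x)=\tfrac12\|\Pi_{K^{\circ}}(g(x))\|^2$$ is convex on $\mathcal X$.
   Context: $\Pi_{C}$ denotes the metric projection onto a closed convex set $C$, and $K^{\circ}=\{v\in\mathcal Y:\langle v,k\rangle\le 0\ \forall k\in K\}$. The mapping $\mathcal F_g:x\mapsto K-g(x)$ is called graph-convex if its graph $\{(x,y)\in\mathcal X\times\mathcal Y: g(x)+y\in K\}$ is a convex set. (One has $\theta(x)=\min_z\{\tfrac12\|z\|^2: g(x)+z\in K\}=\tfrac12\|g(x)-\Pi_K(g(x))\|^2$.) *)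

theory Defs
  imports "HOL-Analysis.Analysis"
begin

definition polar_cone :: "'a::real_inner set \<Rightarrow> 'a set" where
  "polar_cone K = {v. \<forall>k\<in>K. inner v k \<le> 0}"

text \<open>Graph-convexity of the set-valued map x maps to K - g(x):
  its graph is the set of pairs (x,y) with g x + y in K.\<close>
definition graph_convex_map :: "'b::real_vector set \<Rightarrow> ('a::real_vector \<Rightarrow> 'b) \<Rightarrow> bool" where
  "graph_convex_map K g \<longleftrightarrow> convex {(x, y). g x + y \<in> K}"

end

theory Submission
  imports Defs
begin

lemma polar_closed: "closed (polar_cone K)"
proof -
  have "polar_cone K = (\<Inter>k\<in>K. {v. inner v k \<le> 0})"
    unfolding polar_cone_def by auto
  moreover have "closed (\<Inter>k\<in>K. {v::'a. inner v k \<le> 0})"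
    by (intro closed_INT) (auto intro: closed_halfspace_le[of _ 0, simplified inner_commute] continuous_intros closed_Collect_le)
  ultimately show ?thesis by simp
qed

lemma polar_convex: "convex (polar_cone K)"
  unfolding polar_cone_def convex_def
  by (auto simp: inner_add_left intro!: add_nonpos_nonpos mult_nonneg_nonpos)

lemma moreau:
  fixes K :: "'b::euclidean_space set"
  assumes "closed K" "convex_cone K"
  shows "closest_point (polar_cone K) y = y - closest_point K y"
proof -
  have ne: "K \<noteq> {}" using assms(2) by (simp add: convex_cone_def)
  have cvx: "convex K" using assms(2) by (simp add: convex_cone_def)
  define p where "p = closest_point K y"
  define q where "q = y - p"
  have pK: "p \<in> K" unfolding p_def using closest_point_in_set[OF assms(1) ne] .
  have dot: "\<And>k. k \<in> K \<Longrightarrow> inner q (k - p) \<le> 0"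
    unfolding q_def p_def using closest_point_dot[OF cvx assms(1)] by blast
  have "0 \<in> K" using assms(2) by (simp add: convex_cone_iff)
  from dot[OF this] have a: "inner q p \<ge> 0" by (simp add: inner_diff_right)
  have "2 *\<^sub>R p \<in> K" using convex_cone_scaleR[OF assms(2) _ pK] by simp
  from dot[OF this] have b: "inner q p \<le> 0"
    by (simp add: inner_diff_right inner_scaleR_right)
  have qp: "inner q p = 0" using a b by simp
  have qpol: "q \<in> polar_cone K"
  proof -
    have "inner q k \<le> 0" if "k \<in> K" for k
      using dot[OF that] qp by (simp add: inner_diff_right)
    thus ?thesis unfolding polar_cone_def by auto
  qed
  have "\<forall>v\<in>polar_cone K. dist y q \<le> dist y v"
  proof
    fix v assume "v \<in> polar_cone K"
    hence vp: "inner v p \<le> 0" using pK unfolding polar_cone_def by auto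
    have "y - v = p + (q - v)" unfolding q_def by simp
    hence "(norm (y - v))\<^sup>2 = (norm p)\<^sup>2 + (norm (q - v))\<^sup>2 + 2 * inner p (q - v)"
      by (simp only: power2_norm_eq_inner inner_add_left inner_add_right inner_commute[of "q - v" p])
    also have "inner p (q - v) = - inner v p" using qp
      by (simp add: inner_diff_right inner_commute)
    finally have "(norm (y - v))\<^sup>2 \<ge> (norm p)\<^sup>2" using vp
      by (smt (verit) zero_le_power2)
    moreover have "y - q = p" unfolding q_def by simp
    ultimately show "dist y q \<le> dist y v"
      by (simp add: dist_norm power2_le_iff_abs_le[symmetric] norm_ge_zero)
  qed
  from closest_point_unique[OF polar_convex polar_closed qpol this]
  show ?thesis unfolding q_def p_def by simp
qed

theorem proposition2p1:
  fixes K :: "'b::euclidean_space set"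
    and g :: "'a::euclidean_space \<Rightarrow> 'b"
  assumes "closed K" and "convex_cone K"
    and "continuous_on UNIV g"
    and "graph_convex_map K g"
  shows "convex_on UNIV (\<lambda>x. (1/2) * (norm (closest_point (polar_cone K) (g x)))\<^sup>2)"
proof (rule convex_onI)
  show "convex (UNIV :: 'a set)" by simp
  have ne: "K \<noteq> {}" using assms(2) by (simp add: convex_cone_def)
  define P where "P = (\<lambda>y. closest_point K y)"
  have PK: "P y \<in> K" for y unfolding P_def using closest_point_in_set[OF assms(1) ne] .
  have th: "norm (closest_point (polar_cone K) y) = norm (P y - y)" for y
    unfolding P_def moreau[OF assms(1,2)] by (simp add: norm_minus_commute)
  have le: "norm (P y - y) \<le> norm (k - y)" if "k \<in> K" for k y
    using closest_point_le[OF assms(1) that, of y] unfolding P_def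
    by (simp add: dist_norm norm_minus_commute)
  fix t :: real and x1 x2 :: 'a
  assume t: "0 < t" "t < 1"
  define z1 where "z1 = P (g x1) - g x1"
  define z2 where "z2 = P (g x2) - g x2"
  have G: "convex {(x, y). g x + y \<in> K}" using assms(4) unfolding graph_convex_map_def .
  have "(x1, z1) \<in> {(x, y). g x + y \<in> K}" "(x2, z2) \<in> {(x, y). g x + y \<in> K}"
    unfolding z1_def z2_def using PK by auto
  from convexD[OF G this(1) this(2), of "1 - t" t] t
  have "((1 - t) *\<^sub>R x1 + t *\<^sub>R x2, (1 - t) *\<^sub>R z1 + t *\<^sub>R z2) \<in> {(x, y). g x + y \<in> K}"
    by simp
  hence kK: "g ((1 - t) *\<^sub>R x1 + t *\<^sub>R x2) + ((1 - t) *\<^sub>R z1 + t *\<^sub>R z2) \<in> K" by simp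
  define xt where "xt = (1 - t) *\<^sub>R x1 + t *\<^sub>R x2"
  have "norm (P (g xt) - g xt) \<le> norm ((1 - t) *\<^sub>R z1 + t *\<^sub>R z2)"
    using le[OF kK[folded xt_def], of "g xt"] by simp
  also have "\<dots> \<le> (1 - t) * norm z1 + t * norm z2"
    using norm_triangle_ineq[of "(1 - t) *\<^sub>R z1" "t *\<^sub>R z2"] t by simp
  finally have A: "norm (P (g xt) - g xt) \<le> (1 - t) * norm z1 + t * norm z2" .
  have B: "((1 - t) * norm z1 + t * norm z2)\<^sup>2 \<le> (1 - t) * (norm z1)\<^sup>2 + t * (norm z2)\<^sup>2"
  proof -
    have "(1 - t) * (norm z1)\<^sup>2 + t * (norm z2)\<^sup>2 - ((1 - t) * norm z1 + t * norm z2)\<^sup>2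
          = t * (1 - t) * (norm z1 - norm z2)\<^sup>2"
      by (simp add: power2_eq_square algebra_simps)
    moreover have "t * (1 - t) * (norm z1 - norm z2)\<^sup>2 \<ge> 0" using t by simp
    ultimately show ?thesis by linarith
  qed
  have "(norm (P (g xt) - g xt))\<^sup>2 \<le> ((1 - t) * norm z1 + t * norm z2)\<^sup>2"
    using A by (intro power_mono) auto
  with B have "(norm (P (g xt) - g xt))\<^sup>2 \<le> (1 - t) * (norm z1)\<^sup>2 + t * (norm z2)\<^sup>2"
    by linarith
  thus "1 / 2 * (norm (closest_point (polar_cone K) (g ((1 - t) *\<^sub>R x1 + t *\<^sub>R x2))))\<^sup>2
       \<le> (1 - t) * (1 / 2 * (norm (closest_point (polar_cone K) (g x1)))\<^sup>2) +
         t * (1 / 2 * (norm (closest_point (polar_cone K) (g x2)))\<^sup>2)"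
    unfolding th xt_def[symmetric] z1_def[symmetric] z2_def[symmetric] by simp
qed

end
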